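(* Let $N,K$ be positive integers with $K\le\min(N,D_d)$ and let $\Phi_t=t\,\mathrm{id}+(1-t)\Delta$ on $\mathcal L(\mathbb C^d)$. If $t>1/\sqrt K$, then the $N$-tuple $(\Phi_t,\dots,\Phi_t)$ consisting of $N$ copies of $\Phi_t$ is $(N,K)$-strongly incompatible (in particular $(N,K)$-incompatible).
   Context: $\mathrm{id}(X)=X$, $\Delta(X)=(\operatorname{Tr}X)I/d$. $D_d$ is the maximal number of mutually unbiased orthonormal bases of $\mathbb C^d$. A family of channels is compatible if there is a channel into the tensor product of the output spaces whose marginals are the given channels. An $N$-tuple of channels is $(N,K)$-incompatible if at least one $K$-element subfamily is incompatible, and $(N,K)$-strongly incompatible if every $K$-element subfamily is incompatible. *)

theory Defs
  imports "Jordan_Normal_Form.Matrix"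
begin

definition cinner :: "nat \<Rightarrow> complex vec \<Rightarrow> complex vec \<Rightarrow> complex" where
  "cinner n u v = (\<Sum>i<n. cnj (u $ i) * v $ i)"

definition mtrace :: "nat \<Rightarrow> complex mat \<Rightarrow> complex" where
  "mtrace n A = (\<Sum>i<n. A $$ (i, i))"

definition psd :: "nat \<Rightarrow> complex mat \<Rightarrow> bool" where
  "psd n A \<longleftrightarrow> A \<in> carrier_mat n n \<and>
     (\<forall>v \<in> carrier_vec n. cinner n v (A *\<^sub>v v) \<in> \<real> \<and> Re (cinner n v (A *\<^sub>v v)) \<ge> 0)"

text \<open>(id_k \<otimes> Phi)(X), for X a (k*n) x (k*n) matrix seen as a k x k block matrix
  of n x n blocks (row index a*n + r); the result is a (k*m) x (k*m) block matrix.\<close>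
definition id_tensor :: "nat \<Rightarrow> nat \<Rightarrow> nat \<Rightarrow> (complex mat \<Rightarrow> complex mat) \<Rightarrow> complex mat \<Rightarrow> complex mat" where
  "id_tensor k n m Phi X = mat (k * m) (k * m) (\<lambda>(i, j).
      Phi (mat n n (\<lambda>(r, s). X $$ ((i div m) * n + r, (j div m) * n + s))) $$ (i mod m, j mod m))"

definition channel :: "nat \<Rightarrow> nat \<Rightarrow> (complex mat \<Rightarrow> complex mat) \<Rightarrow> bool" where
  "channel n m Phi \<longleftrightarrow>
     (\<forall>X \<in> carrier_mat n n. Phi X \<in> carrier_mat m m) \<and>
     (\<forall>X \<in> carrier_mat n n. \<forall>Y \<in> carrier_mat n n. Phi (X + Y) = Phi X + Phi Y) \<and>
     (\<forall>c. \<forall>X \<in> carrier_mat n n. Phi (c \<cdot>\<^sub>m X) = c \<cdot>\<^sub>m Phi X) \<and>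
     (\<forall>k. \<forall>X. psd (k * n) X \<longrightarrow> psd (k * m) (id_tensor k n m Phi X)) \<and>
     (\<forall>X \<in> carrier_mat n n. mtrace m (Phi X) = mtrace n X)"

text \<open>Basis index i < d^K of (C^d)^{\<otimes>K} has digit l (tensor factor l) equal to
  (i div d^l) mod d.\<close>
definition digit :: "nat \<Rightarrow> nat \<Rightarrow> nat \<Rightarrow> nat" where
  "digit d l i = (i div d ^ l) mod d"

text \<open>Partial trace over all tensor factors except factor j.\<close>
definition marginal :: "nat \<Rightarrow> nat \<Rightarrow> nat \<Rightarrow> complex mat \<Rightarrow> complex mat" where
  "marginal d K j X = mat d d (\<lambda>(r, s).
      \<Sum>i \<in> {i. i < d ^ K \<and> digit d j i = r}. X $$ (i, i - r * d ^ j + s * d ^ j))"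

text \<open>Compatibility of the subfamily (Phi i)_{i \<in> S} of channels on L(C^d): there is a
  channel into the tensor product of |S| copies of C^d whose marginals are the Phi i
  (the elements of S being attached to the tensor factors in increasing order).\<close>
definition compatible :: "nat \<Rightarrow> (nat \<Rightarrow> complex mat \<Rightarrow> complex mat) \<Rightarrow> nat set \<Rightarrow> bool" where
  "compatible d Phi S \<longleftrightarrow>
     (\<exists>Psi. channel d (d ^ card S) Psi \<and>
        (\<forall>j < card S. \<forall>X \<in> carrier_mat d d.
            marginal d (card S) j (Psi X) = Phi (sorted_list_of_set S ! j) X))"

definition NK_incompatible :: "nat \<Rightarrow> nat \<Rightarrow> nat \<Rightarrow> (nat \<Rightarrow> complex mat \<Rightarrow> complex mat) \<Rightarrow> bool" where
  "NK_incompatible d N K Phi \<longleftrightarrow>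
     (\<exists>S. S \<subseteq> {..<N} \<and> card S = K \<and> \<not> compatible d Phi S)"

definition NK_strongly_incompatible :: "nat \<Rightarrow> nat \<Rightarrow> nat \<Rightarrow> (nat \<Rightarrow> complex mat \<Rightarrow> complex mat) \<Rightarrow> bool" where
  "NK_strongly_incompatible d N K Phi \<longleftrightarrow>
     (\<forall>S. S \<subseteq> {..<N} \<and> card S = K \<longrightarrow> \<not> compatible d Phi S)"

definition orthonormal_basis :: "nat \<Rightarrow> (nat \<Rightarrow> complex vec) \<Rightarrow> bool" where
  "orthonormal_basis d b \<longleftrightarrow> (\<forall>k < d. b k \<in> carrier_vec d) \<and>
     (\<forall>k < d. \<forall>l < d. cinner d (b k) (b l) = (if k = l then 1 else 0))"

definition MUB_family :: "nat \<Rightarrow> nat \<Rightarrow> (nat \<Rightarrow> nat \<Rightarrow> complex vec) \<Rightarrow> bool" where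
  "MUB_family d m B \<longleftrightarrow> (\<forall>i < m. orthonormal_basis d (B i)) \<and>
     (\<forall>i < m. \<forall>j < m. i \<noteq> j \<longrightarrow>
        (\<forall>k < d. \<forall>l < d. (cmod (cinner d (B i k) (B j l)))\<^sup>2 = 1 / real d))"

definition max_MUB :: "nat \<Rightarrow> nat" where
  "max_MUB d = (GREATEST m. \<exists>B. MUB_family d m B)"

definition Phi_t :: "nat \<Rightarrow> real \<Rightarrow> complex mat \<Rightarrow> complex mat" where
  "Phi_t d t X = complex_of_real t \<cdot>\<^sub>m X +
     (complex_of_real (1 - t) * mtrace d X / of_nat d) \<cdot>\<^sub>m one_mat d"

end

theory Submission
  imports Defs "Jordan_Normal_Form.Determinant"
begin


lemma digit_0: "digit d 0 x = x mod d" by (simp add: digit_def)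
lemma digit_Suc: "digit d (Suc l) x = digit d l (x div d)"
  by (simp add: digit_def div_mult2_eq mult.commute)

lemma digits_eq:
  assumes "0 < d"
  shows "x < d^K \<Longrightarrow> y < d^K \<Longrightarrow> (\<forall>l<K. digit d l x = digit d l y) \<Longrightarrow> x = y"
proof (induction K arbitrary: x y)
  case 0 then show ?case by simp
next
  case (Suc K)
  have "x div d < d^K" "y div d < d^K" using Suc.prems(1,2)
    by (simp_all add: less_mult_imp_div_less mult.commute)
  moreover have "\<forall>l<K. digit d l (x div d) = digit d l (y div d)"
    using Suc.prems(3) by (metis Suc_mono digit_Suc)
  ultimately have "x div d = y div d" using Suc.IH by blast
  moreover have "x mod d = y mod d" using Suc.prems(3)[rule_format, of 0] by (simp add: digit_0)
  ultimately show ?case by (metis div_mult_mod_eq)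
qed

lemma sum_split:
  fixes F :: "nat \<Rightarrow> 'a::comm_monoid_add"
  shows "(\<Sum>i<d*m. F i) = (\<Sum>a<d. \<Sum>b<m. F (a + d*b))"
proof -
  have inj: "inj_on (\<lambda>(a,b). a + d*b) ({..<d} \<times> {..<m})"
  proof (rule inj_onI, clarsimp)
    fix a b a' b' assume "a < d" "b < m" "a' < d" "b' < m" "a + d*b = a' + d*b'"
    then have "(a + d*b) mod d = (a' + d*b') mod d" "(a + d*b) div d = (a' + d*b') div d" by simp_all
    then show "a = a' \<and> b = b'" using \<open>a<d\<close> \<open>a'<d\<close> by simp
  qed
  have img: "(\<lambda>(a,b). a + d*b) ` ({..<d} \<times> {..<m}) = {..<d*m}"
  proof
    show "(\<lambda>(a,b). a + d*b) ` ({..<d} \<times> {..<m}) \<subseteq> {..<d*m}"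
    proof clarsimp
      fix a b assume "a < d" "b < m"
      then have "a + d*b < d + d*b" by simp
      also have "\<dots> = d * Suc b" by simp
      also have "\<dots> \<le> d*m" by (rule mult_le_mono2) (use \<open>b<m\<close> in simp)
      finally show "a + d*b < d*m" .
    qed
  next
    show "{..<d*m} \<subseteq> (\<lambda>(a,b). a + d*b) ` ({..<d} \<times> {..<m})"
    proof
      fix i assume "i \<in> {..<d*m}"
      then have "i < d*m" by simp
      then have "0 < d" by (cases d) auto
      have "i = i mod d + d*(i div d)" by simp
      moreover have "i mod d < d" using \<open>0<d\<close> by simp
      moreover have "i div d < m" using \<open>i<d*m\<close> by (simp add: less_mult_imp_div_less mult.commute)
      ultimately show "i \<in> (\<lambda>(a,b). a + d*b) ` ({..<d} \<times> {..<m})" by force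
    qed
  qed
  have "(\<Sum>i<d*m. F i) = sum F ((\<lambda>(a,b). a + d*b) ` ({..<d} \<times> {..<m}))" by (simp add: img)
  also have "\<dots> = (\<Sum>(a,b)\<in>{..<d} \<times> {..<m}. F (a + d*b))"
    by (subst sum.reindex[OF inj]) (simp add: case_prod_unfold)
  also have "\<dots> = (\<Sum>a<d. \<Sum>b<m. F (a + d*b))" by (simp add: sum.cartesian_product)
  finally show ?thesis .
qed

lemma sum_prod_digits:
  fixes g :: "nat \<Rightarrow> nat \<Rightarrow> 'a::comm_semiring_1"
  shows "(\<Sum>i<d^K. \<Prod>l<K. g l (digit d l i)) = (\<Prod>l<K. \<Sum>k<d. g l k)"
proof (induction K arbitrary: g)
  case 0 then show ?case by simp
next
  case (Suc K)
  have "(\<Sum>i<d^Suc K. \<Prod>l<Suc K. g l (digit d l i))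
      = (\<Sum>a<d. \<Sum>b<d^K. \<Prod>l<Suc K. g l (digit d l (a + d*b)))"
    by (simp add: sum_split)
  also have "\<dots> = (\<Sum>a<d. \<Sum>b<d^K. g 0 a * (\<Prod>l<K. g (Suc l) (digit d l b)))"
    by (intro sum.cong refl) (subst prod.lessThan_Suc_shift, simp add: digit_0 digit_Suc)
  also have "\<dots> = (\<Sum>a<d. g 0 a) * (\<Sum>b<d^K. \<Prod>l<K. g (Suc l) (digit d l b))"
    by (simp add: sum_product)
  also have "\<dots> = (\<Sum>a<d. g 0 a) * (\<Prod>l<K. \<Sum>k<d. g (Suc l) k)" using Suc.IH[of "\<lambda>l. g (Suc l)"] by simp
  also have "\<dots> = (\<Prod>l<Suc K. \<Sum>k<d. g l k)" by (subst prod.lessThan_Suc_shift, simp)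
  finally show ?case .
qed


lemma digit_add_high:
  assumes d: "0 < d" and x: "x < d^j"
  shows "digit d l (x + d^j*m) = (if l < j then digit d l x else digit d (l-j) m)"
proof (cases "l < j")
  case True
  obtain i where ji: "j = Suc (l + i)" using True less_imp_Suc_add by blast
  have pj: "d^j = d^l * (d * d^(j-l-1))" by (simp add: ji power_add)
  have "(x + d^j*m) div d^l = x div d^l + d * (d^(j-l-1)*m)"
    using d by (simp add: pj mult.assoc)
  then show ?thesis using True by (simp add: digit_def)
next
  case False
  obtain i where li: "l = j + i" using False by (metis le_add_diff_inverse not_less)
  have pl: "d^l = d^j * d^(l-j)" by (simp add: li power_add)
  have "(x + d^j*m) div d^j = m" using x d by simp
  then have "(x + d^j*m) div d^l = m div d^(l-j)" by (simp add: pl div_mult2_eq)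
  then show ?thesis using False by (simp add: digit_def)
qed

lemma div_pow_Suc: "p div d^j = digit d j p + d * (p div d^(Suc j))"
proof -
  have h: "p div d^(Suc j) = (p div d^j) div d" by (simp only: power_Suc2 div_mult2_eq)
  show ?thesis unfolding digit_def h by simp
qed

definition upd :: "nat \<Rightarrow> nat \<Rightarrow> nat \<Rightarrow> nat \<Rightarrow> nat" where
  "upd d j p s = p - digit d j p * d^j + s * d^j"

lemma p_decomp: "p = p mod d^j + d^j * (digit d j p + d * (p div d^(Suc j)))"
proof -
  have "p = p mod d^j + d^j * (p div d^j)" by simp
  then show ?thesis by (simp only: div_pow_Suc[of p d j])
qed

lemma upd_decomp:
  assumes "0 < d"
  shows "upd d j p s = p mod d^j + d^j * (s + d * (p div d^(Suc j)))"
proof -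
  have p: "p = p mod d^j + d^j * (digit d j p + d * (p div d^(Suc j)))"
    by (rule p_decomp)
  have "p - digit d j p * d^j = p mod d^j + d^j * (d * (p div d^(Suc j)))"
    by (subst p) (simp add: algebra_simps)
  then show ?thesis by (simp add: upd_def algebra_simps)
qed

lemma digit_upd:
  assumes d: "0 < d" and s: "s < d"
  shows "digit d l (upd d j p s) = (if l = j then s else digit d l p)"
proof -
  let ?C = "p div d^(Suc j)"
  have A: "p mod d^j < d^j" using d by simp
  have p: "p = p mod d^j + d^j * (digit d j p + d * ?C)"
    by (rule p_decomp)
  have r: "digit d j p < d" using d by (simp add: digit_def)
  show ?thesis
  proof (cases "l < j")
    case True
    then show ?thesis
      using digit_add_high[OF d A, of l "digit d j p + d * ?C"]
        digit_add_high[OF d A, of l "s + d * ?C"] p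
      by (simp add: upd_decomp[OF d])
  next
    case False
    then obtain i where il: "l = j + i" by (auto simp: not_less le_iff_add)
    then have i: "l - j = i" "l = j + i" by simp_all
    have e1: "digit d l (upd d j p s) = digit d i (s + d * ?C)"
      using digit_add_high[OF d A, of l "s + d * ?C"] False i by (simp add: upd_decomp[OF d])
    have e2: "digit d l p = digit d i (digit d j p + d * ?C)"
      using digit_add_high[OF d A, of l "digit d j p + d * ?C"] False i p by simp
    show ?thesis
    proof (cases i)
      case 0 then show ?thesis using e1 i s by (simp add: digit_0)
    next
      case (Suc i')
      then show ?thesis using e1 e2 i s r by (simp add: digit_Suc)
    qed
  qed
qed

lemma upd_less:
  assumes d: "0 < d" and s: "s < d" and p: "p < d^K" and j: "j < K"
  shows "upd d j p s < d^K"
proof -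
  let ?C = "p div d^(Suc j)"
  obtain i where Ki: "K = Suc j + i" using j by (metis Suc_leI le_add_diff_inverse)
  have pK: "d^K = d^(Suc j) * d^(K - Suc j)" by (simp add: Ki power_add)
  have C: "?C < d^(K - Suc j)" using p pK
    by (simp add: less_mult_imp_div_less mult.commute)
  have "s + d * ?C + 1 \<le> d * (?C + 1)" using s by simp
  also have "\<dots> \<le> d * d^(K - Suc j)" using C by (intro mult_le_mono2) simp
  finally have m: "s + d * ?C + 1 \<le> d * d^(K - Suc j)" .
  have "p mod d^j < d^j" using d by simp
  then have "upd d j p s + 1 \<le> d^j + d^j * (s + d * ?C)"
    by (simp add: upd_decomp[OF d])
  also have "\<dots> = d^j * (s + d * ?C + 1)" by (simp add: algebra_simps)
  also have "\<dots> \<le> d^j * (d * d^(K - Suc j))" using m by (intro mult_le_mono2)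
  also have "\<dots> = d^K" using pK by simp
  finally show ?thesis by simp
qed

lemma upd_char:
  assumes d: "0 < d" and p: "p < d^K" and q: "q < d^K" and j: "j < K"
    and eq: "\<forall>l<K. l \<noteq> j \<longrightarrow> digit d l q = digit d l p"
  shows "q = upd d j p (digit d j q)"
proof (rule digits_eq[OF d q])
  have dq: "digit d j q < d" using d by (simp add: digit_def)
  show "upd d j p (digit d j q) < d^K" by (rule upd_less[OF d dq p j])
  show "\<forall>l<K. digit d l q = digit d l (upd d j p (digit d j q))"
    using eq digit_upd[OF d dq] by simp
qed

lemma upd_self: "upd d j p (digit d j p) = p"
proof -
  have "digit d j p * d^j \<le> (p div d^j) * d^j" by (simp add: digit_def)
  also have "\<dots> \<le> p" by (rule div_times_less_eq_dividend)
  finally show ?thesis by (simp add: upd_def)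
qed



lemma cinner_mat:
  assumes "M \<in> carrier_mat n n" "v \<in> carrier_vec n"
  shows "cinner n u (M *\<^sub>v v) = (\<Sum>p<n. cnj (u $ p) * (\<Sum>q<n. M $$ (p,q) * v $ q))"
  using assms by (auto simp: cinner_def scalar_prod_def atLeast0LessThan intro!: sum.cong)

lemma onb_complete:
  assumes onb: "orthonormal_basis d b" and r: "r < d" and s: "s < d"
  shows "(\<Sum>k<d. b k $ r * cnj (b k $ s)) = (if r = s then 1 else 0)"
proof -
  define U where "U = mat d d (\<lambda>(r,k). b k $ r)"
  define V where "V = mat d d (\<lambda>(k,r). cnj (b k $ r))"
  have U: "U \<in> carrier_mat d d" and V: "V \<in> carrier_mat d d" by (simp_all add: U_def V_def)
  have "V * U = 1\<^sub>m d"
  proof (rule eq_matI)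
    fix i j assume ij: "i < dim_row (1\<^sub>m d)" "j < dim_col (1\<^sub>m d)"
    have "(V * U) $$ (i,j) = (\<Sum>r<d. cnj (b i $ r) * b j $ r)"
      using ij by (simp add: U_def V_def scalar_prod_def atLeast0LessThan)
    also have "\<dots> = cinner d (b i) (b j)" by (simp add: cinner_def)
    also have "\<dots> = 1\<^sub>m d $$ (i,j)" using onb ij by (simp add: orthonormal_basis_def)
    finally show "(V * U) $$ (i,j) = 1\<^sub>m d $$ (i,j)" .
  qed (simp_all add: U_def V_def)
  then have "U * V = 1\<^sub>m d" by (rule mat_mult_left_right_inverse[OF V U])
  then have "(U * V) $$ (r,s) = 1\<^sub>m d $$ (r,s)" by simp
  then show ?thesis using r s by (simp add: U_def V_def scalar_prod_def atLeast0LessThan)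
qed

lemma real_CS:
  fixes f g :: "'x \<Rightarrow> real"
  assumes "finite I"
  shows "(\<Sum>i\<in>I. f i * g i)^2 \<le> (\<Sum>i\<in>I. (f i)^2) * (\<Sum>i\<in>I. (g i)^2)"
proof -
  have "0 \<le> (\<Sum>i\<in>I. \<Sum>j\<in>I. (f i * g j - f j * g i)^2)" by (intro sum_nonneg) simp
  also have "\<dots> = (\<Sum>i\<in>I. \<Sum>j\<in>I. (f i)^2 * (g j)^2 + (f j)^2 * (g i)^2 - 2 * ((f i * g i) * (f j * g j)))"
    by (intro sum.cong refl) (simp add: power2_eq_square algebra_simps)
  also have "\<dots> = (\<Sum>i\<in>I. \<Sum>j\<in>I. (f i)^2 * (g j)^2) + (\<Sum>i\<in>I. \<Sum>j\<in>I. (f j)^2 * (g i)^2)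
      - 2 * (\<Sum>i\<in>I. \<Sum>j\<in>I. (f i * g i) * (f j * g j))"
    by (simp add: sum_subtractf sum.distrib sum_distrib_left)
  also have "\<dots> = 2 * ((\<Sum>i\<in>I. (f i)^2) * (\<Sum>i\<in>I. (g i)^2) - (\<Sum>i\<in>I. f i * g i)^2)"
    by (simp add: sum_product[symmetric] power2_eq_square[of "sum _ _"] sum.swap[of "\<lambda>i j. (f j)^2 * (g i)^2"] mult.commute)
  finally show ?thesis by simp
qed

definition hs :: "'x set \<Rightarrow> ('x \<Rightarrow> complex) \<Rightarrow> ('x \<Rightarrow> complex) \<Rightarrow> complex" where
  "hs I F G = (\<Sum>x\<in>I. cnj (F x) * G x)"

lemma hs_self: "hs I F F = of_real (\<Sum>x\<in>I. (cmod (F x))^2)"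
  unfolding hs_def of_real_sum by (intro sum.cong refl) (simp only: complex_norm_square mult.commute)

lemma complex_CS:
  assumes "finite I"
  shows "(cmod (hs I F G))^2 \<le> (\<Sum>x\<in>I. (cmod (F x))^2) * (\<Sum>x\<in>I. (cmod (G x))^2)"
proof -
  have "cmod (hs I F G) \<le> (\<Sum>x\<in>I. cmod (F x) * cmod (G x))"
    unfolding hs_def by (rule order_trans[OF norm_sum]) (simp add: norm_mult)
  then have "(cmod (hs I F G))^2 \<le> (\<Sum>x\<in>I. cmod (F x) * cmod (G x))^2"
    by (simp add: power_mono)
  also have "\<dots> \<le> (\<Sum>x\<in>I. (cmod (F x))^2) * (\<Sum>x\<in>I. (cmod (G x))^2)"
    by (rule real_CS[OF assms])
  finally show ?thesis .
qed

lemma hs_sum_left: "hs I (\<lambda>x. \<Sum>j\<in>J. F j x) G = (\<Sum>j\<in>J. hs I (F j) G)"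
  by (simp add: hs_def sum_distrib_right sum.swap[of _ J I] cnj_sum)
lemma hs_sum_right: "hs I F (\<lambda>x. \<Sum>j\<in>J. G j x) = (\<Sum>j\<in>J. hs I F (G j))"
  by (simp add: hs_def sum_distrib_left sum.swap[of _ J I])
lemma hs_scale_left: "hs I (\<lambda>x. c * F x) G = cnj c * hs I F G"
  by (simp add: hs_def sum_distrib_left algebra_simps)
lemma hs_scale_right: "hs I F (\<lambda>x. c * G x) = c * hs I F G"
  by (simp add: hs_def sum_distrib_left algebra_simps)


definition nrm :: "nat \<Rightarrow> (nat \<Rightarrow> complex) \<Rightarrow> real" where
  "nrm d u = (\<Sum>r<d. (cmod (u r))^2)"
definition ip :: "nat \<Rightarrow> (nat \<Rightarrow> complex) \<Rightarrow> (nat \<Rightarrow> complex) \<Rightarrow> complex" where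
  "ip d u v = (\<Sum>r<d. cnj (u r) * v r)"
definition Pm :: "nat \<Rightarrow> (nat \<Rightarrow> complex) \<Rightarrow> nat \<times> nat \<Rightarrow> complex" where
  "Pm d u = (\<lambda>(r,s). u r * cnj (u s) - (if r = s then of_real (nrm d u) / of_nat d else 0))"
abbreviation I2 :: "nat \<Rightarrow> (nat \<times> nat) set" where "I2 d \<equiv> {..<d} \<times> {..<d}"

lemma ip_self: "ip d u u = of_real (nrm d u)"
  unfolding ip_def nrm_def of_real_sum by (intro sum.cong refl) (simp only: complex_norm_square mult.commute)

lemma nrm_nonneg: "0 \<le> nrm d u" by (simp add: nrm_def sum_nonneg)

lemma hs_I2: "hs (I2 d) F G = (\<Sum>r<d. \<Sum>s<d. cnj (F (r,s)) * G (r,s))"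
  by (simp add: hs_def sum.cartesian_product)

lemma sum_delta_2: "(\<Sum>r<(d::nat). \<Sum>s<d. (if r = s then f r s else 0)) = (\<Sum>r<d. f r r)"
proof (intro sum.cong refl)
  fix r assume "r \<in> {..<d}"
  then show "(\<Sum>s<d. (if r = s then f r s else 0)) = f r r"
    by (subst sum.delta') auto
qed

lemma hs_Pm:
  assumes d: "0 < d"
  shows "hs (I2 d) (Pm d u) (Pm d v) = of_real ((cmod (ip d u v))^2 - nrm d u * nrm d v / d)"
proof -
  define a where "a = of_real (nrm d u) / (of_nat d :: complex)"
  define b where "b = of_real (nrm d v) / (of_nat d :: complex)"
  have ca: "cnj a = a" by (simp add: a_def)
  have "hs (I2 d) (Pm d u) (Pm d v) = (\<Sum>r<d. \<Sum>s<d.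
      (cnj (u r) * v r) * (u s * cnj (v s))
      - (if r = s then cnj (u r) * u r * b else 0)
      - (if r = s then a * (v r * cnj (v r)) else 0)
      + (if r = s then a * b else 0))"
    unfolding hs_I2 Pm_def a_def[symmetric] b_def[symmetric]
  proof (intro sum.cong refl)
    fix r s
    have h: "\<And>X Y Z W :: complex. cnj (X - Y) * (Z - W) = cnj X * Z - cnj X * W - cnj Y * Z + cnj Y * W"
      by (simp add: algebra_simps)
    have e: "cnj (u r * cnj (u s)) * (v r * cnj (v s)) = (cnj (u r) * v r) * (u s * cnj (v s))"
      by (simp add: mult_ac)
    show "cnj (case (r, s) of (r, s) \<Rightarrow> u r * cnj (u s) - (if r = s then a else 0)) *
          (case (r, s) of (r, s) \<Rightarrow> v r * cnj (v s) - (if r = s then b else 0)) =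
        (cnj (u r) * v r) * (u s * cnj (v s))
      - (if r = s then cnj (u r) * u r * b else 0)
      - (if r = s then a * (v r * cnj (v r)) else 0)
      + (if r = s then a * b else 0)"
      unfolding case_prod_conv h e by (cases "r = s") (simp_all add: ca mult_ac)
  qed
  also have "\<dots> = ip d u v * cnj (ip d u v) - of_real (nrm d u) * b - a * of_real (nrm d v)
      + of_nat d * a * b"
  proof -
    have e1: "(\<Sum>r<d. \<Sum>s<d. (cnj (u r) * v r) * (u s * cnj (v s))) = ip d u v * cnj (ip d u v)"
      by (simp add: ip_def cnj_sum sum_product)
    have e2: "(\<Sum>r<d. \<Sum>s<d. (if r = s then cnj (u r) * u r * b else 0)) = of_real (nrm d u) * b"
      by (simp add: sum_delta_2 ip_self[symmetric] ip_def sum_distrib_right)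
    have e3: "(\<Sum>r<d. \<Sum>s<d. (if r = s then a * (v r * cnj (v r)) else 0)) = a * of_real (nrm d v)"
      by (simp add: sum_delta_2 ip_self[symmetric] ip_def sum_distrib_left mult.commute)
    have e4: "(\<Sum>r<d. \<Sum>s<d. (if r = s then a * b else 0)) = of_nat d * a * b"
      by (simp add: sum_delta_2)
    show ?thesis
      by (simp only: sum.distrib sum_subtractf e1 e2 e3 e4)
  qed
  also have "\<dots> = of_real ((cmod (ip d u v))^2 - nrm d u * nrm d v / d)"
  proof -
    have "ip d u v * cnj (ip d u v) = of_real ((cmod (ip d u v))^2)" by (simp only: complex_norm_square)
    moreover have "a = of_real (nrm d u / d)" "b = of_real (nrm d v / d)" by (simp_all add: a_def b_def)
    ultimately show ?thesis using d by (simp add: field_simps)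
  qed
  finally show ?thesis .
qed


lemma mub_ineq:
  fixes u :: "nat \<Rightarrow> nat \<Rightarrow> complex" and d K :: nat
  assumes d: "0 < d"
    and unit: "\<forall>j<K. nrm d (u j) = 1"
    and unb: "\<forall>i<K. \<forall>j<K. i \<noteq> j \<longrightarrow> (cmod (ip d (u i) (u j)))^2 = 1 / d"
  shows "(\<Sum>j<K. (cmod (ip d (u j) v))^2) \<le> (K + sqrt K * (d - 1)) / d * nrm d v"
proof -
  define A where "A = (\<lambda>x. \<Sum>j<K. Pm d (u j) x)"
  define N where "N = nrm d v"
  have N0: "0 \<le> N" by (simp add: N_def nrm_nonneg)
  define S where "S = (\<Sum>j<K. (cmod (ip d (u j) v))^2 - N / d)"
  have hAB: "hs (I2 d) A (Pm d v) = of_real S"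
    unfolding A_def hs_sum_left S_def of_real_sum
    by (intro sum.cong refl) (simp add: hs_Pm[OF d] unit N_def)
  have hAA: "hs (I2 d) A A = of_real (K * (1 - 1/d))"
  proof -
    have "hs (I2 d) A A = (\<Sum>i<K. \<Sum>j<K. hs (I2 d) (Pm d (u i)) (Pm d (u j)))"
      unfolding A_def hs_sum_left hs_sum_right ..
    also have "\<dots> = (\<Sum>i<K. \<Sum>j<K. if i = j then of_real (1 - 1/d) else 0)"
    proof (intro sum.cong refl)
      fix i j assume ij: "i \<in> {..<K}" "j \<in> {..<K}"
      show "hs (I2 d) (Pm d (u i)) (Pm d (u j)) = (if i = j then of_real (1 - 1/d) else 0)"
      proof (cases "i = j")
        case True
        then show ?thesis using ij unit by (simp add: hs_Pm[OF d] ip_self)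
      next
        case False
        then show ?thesis using ij unit unb by (simp add: hs_Pm[OF d])
      qed
    qed
    also have "\<dots> = of_real (K * (1 - 1/d))" by (simp add: sum_delta_2)
    finally show ?thesis .
  qed
  have hBB: "hs (I2 d) (Pm d v) (Pm d v) = of_real (N^2 * (1 - 1/d))"
    by (simp add: hs_Pm[OF d] ip_self N_def power2_eq_square algebra_simps)
  have "(cmod (hs (I2 d) A (Pm d v)))^2
      \<le> (\<Sum>x\<in>I2 d. (cmod (A x))^2) * (\<Sum>x\<in>I2 d. (cmod (Pm d v x))^2)"
    by (rule complex_CS) simp
  also have "(\<Sum>x\<in>I2 d. (cmod (A x))^2) = K * (1 - 1/d)"
    using hAA hs_self[of "I2 d" A] by (metis of_real_eq_iff)
  also have "(\<Sum>x\<in>I2 d. (cmod (Pm d v x))^2) = N^2 * (1 - 1/d)"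
    using hBB hs_self[of "I2 d" "Pm d v"] by (metis of_real_eq_iff)
  finally have "S^2 \<le> (K * (1 - 1/d)) * (N^2 * (1 - 1/d))" using hAB by simp
  also have "\<dots> = (sqrt K * (1 - 1/d) * N)^2" by (simp add: power2_eq_square algebra_simps)
  finally have "S^2 \<le> (sqrt K * (1 - 1/d) * N)^2" .
  moreover have "0 \<le> sqrt K * (1 - 1/d) * N" using d N0 by simp
  ultimately have "S \<le> sqrt K * (1 - 1/d) * N" using power2_le_imp_le by fastforce
  moreover have "S = (\<Sum>j<K. (cmod (ip d (u j) v))^2) - K * N / d"
    by (simp add: S_def sum_subtractf)
  ultimately have "(\<Sum>j<K. (cmod (ip d (u j) v))^2) \<le> sqrt K * (1 - 1/d) * N + K * N / d" by simp
  also have "\<dots> = (K + sqrt K * (d - 1)) / d * N" using d by (simp add: field_simps)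
  finally show ?thesis by (simp add: N_def)
qed

lemma bessel:
  fixes F :: "nat \<Rightarrow> 'x \<Rightarrow> complex"
  assumes fin: "finite I" and al: "0 < \<alpha>"
    and orth: "\<forall>i<m. \<forall>j<m. hs I (F i) (F j) = (if i = j then of_real \<alpha> else 0)"
  shows "(\<Sum>i<m. (cmod (hs I (F i) w))^2) \<le> \<alpha> * (\<Sum>x\<in>I. (cmod (w x))^2)"
proof -
  define c where "c i = hs I (F i) w" for i
  define S where "S = (\<Sum>i<m. (cmod (c i))^2)"
  define z where "z = (\<lambda>x. \<Sum>i<m. c i * F i x)"
  have S0: "0 \<le> S" by (simp add: S_def sum_nonneg)
  have hzw: "hs I z w = of_real S"
    unfolding z_def hs_sum_left hs_scale_left S_def of_real_sum c_def[symmetric]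
    by (intro sum.cong refl) (simp only: complex_norm_square mult.commute)
  have "hs I z z = (\<Sum>i<m. \<Sum>j<m. cnj (c i) * (c j * hs I (F i) (F j)))"
    unfolding z_def hs_sum_left hs_sum_right hs_scale_left hs_scale_right
    by (simp add: sum_distrib_left)
  also have "\<dots> = (\<Sum>i<m. \<Sum>j<m. if i = j then of_real \<alpha> * (cnj (c i) * c i) else 0)"
    by (intro sum.cong refl) (simp add: orth)
  also have "\<dots> = of_real (\<alpha> * S)"
    unfolding sum_delta_2 S_def of_real_mult of_real_sum sum_distrib_left
    by (intro sum.cong refl) (simp only: complex_norm_square mult.commute)
  finally have hzz: "hs I z z = of_real (\<alpha> * S)" .
  have "S^2 \<le> (\<Sum>x\<in>I. (cmod (z x))^2) * (\<Sum>x\<in>I. (cmod (w x))^2)"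
    using complex_CS[OF fin, of z w] hzw by simp
  also have "(\<Sum>x\<in>I. (cmod (z x))^2) = \<alpha> * S"
    using hzz hs_self[of I z] by (metis of_real_eq_iff)
  finally have *: "S * S \<le> S * (\<alpha> * (\<Sum>x\<in>I. (cmod (w x))^2))" by (simp add: power2_eq_square mult_ac)
  show ?thesis
  proof (cases "S = 0")
    case True
    then show ?thesis using al by (simp add: S_def c_def sum_nonneg)
  next
    case False
    then have "0 < S" using S0 by simp
    then have "S \<le> \<alpha> * (\<Sum>x\<in>I. (cmod (w x))^2)" using * by simp
    then show ?thesis by (simp add: S_def c_def)
  qed
qed



lemma cinner_ip: "cinner d x y = ip d (\<lambda>r. x $ r) (\<lambda>r. y $ r)"
  by (simp add: cinner_def ip_def)

lemma mub_bound:
  assumes d: "2 \<le> d" and mub: "MUB_family d m B"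
  shows "m \<le> d^2"
proof -
  have d0: "0 < d" using d by simp
  define u where "u i = (\<lambda>r. B i 0 $ r)" for i
  define F where "F i = Pm d (u i)" for i
  define \<alpha> where "\<alpha> = 1 - 1 / real d"
  have al: "0 < \<alpha>" using d by (simp add: \<alpha>_def)
  have unit: "nrm d (u i) = 1" if "i < m" for i
  proof -
    have "cinner d (B i 0) (B i 0) = 1" using mub that d0 by (simp add: MUB_family_def orthonormal_basis_def)
    then have "of_real (nrm d (u i)) = (1::complex)" by (simp add: cinner_ip u_def ip_self)
    then show ?thesis by (metis of_real_eq_1_iff)
  qed
  have orth: "\<forall>i<m. \<forall>j<m. hs (I2 d) (F i) (F j) = (if i = j then of_real \<alpha> else 0)"
  proof (intro allI impI)
    fix i j assume ij: "i < m" "j < m"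
    show "hs (I2 d) (F i) (F j) = (if i = j then of_real \<alpha> else 0)"
    proof (cases "i = j")
      case True
      then show ?thesis using ij unit by (simp add: F_def hs_Pm[OF d0] ip_self \<alpha>_def)
    next
      case False
      have "(cmod (cinner d (B i 0) (B j 0)))^2 = 1 / real d"
        using mub ij False d0 by (simp add: MUB_family_def)
      then have "(cmod (ip d (u i) (u j)))^2 = 1 / real d" by (simp add: cinner_ip u_def)
      then show ?thesis using ij unit False by (simp add: F_def hs_Pm[OF d0])
    qed
  qed
  have pt: "(\<Sum>i<m. (cmod (F i x))^2) \<le> \<alpha>" if x: "x \<in> I2 d" for x
  proof -
    define w where "w = (\<lambda>y. if y = x then (1::complex) else 0)"
    have "(\<Sum>i<m. (cmod (hs (I2 d) (F i) w))^2) \<le> \<alpha> * (\<Sum>y\<in>I2 d. (cmod (w y))^2)"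
      by (rule bessel[OF _ al orth]) simp
    moreover have "hs (I2 d) (F i) w = cnj (F i x)" for i
      unfolding hs_def w_def using x by (simp add: if_distrib[of "\<lambda>t. cnj (F i _) * t"] sum.delta cong: if_cong)
    moreover have "(\<Sum>y\<in>I2 d. (cmod (w y))^2) = 1"
      unfolding w_def using x by (simp add: if_distrib[of "\<lambda>t. (cmod t)^2"] sum.delta cong: if_cong)
    ultimately show ?thesis by simp
  qed
  have "(\<Sum>x\<in>I2 d. \<Sum>i<m. (cmod (F i x))^2) \<le> (\<Sum>x\<in>I2 d. \<alpha>)"
    by (rule sum_mono) (rule pt)
  also have "\<dots> = d^2 * \<alpha>" by (simp add: power2_eq_square)
  finally have le: "(\<Sum>x\<in>I2 d. \<Sum>i<m. (cmod (F i x))^2) \<le> d^2 * \<alpha>" .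
  have "(\<Sum>x\<in>I2 d. \<Sum>i<m. (cmod (F i x))^2) = (\<Sum>i<m. \<Sum>x\<in>I2 d. (cmod (F i x))^2)"
    by (rule sum.swap)
  also have "\<dots> = (\<Sum>i<m. \<alpha>)"
  proof (intro sum.cong refl)
    fix i assume "i \<in> {..<m}"
    then have "hs (I2 d) (F i) (F i) = of_real \<alpha>" using orth by simp
    then show "(\<Sum>x\<in>I2 d. (cmod (F i x))^2) = \<alpha>" using hs_self[of "I2 d" "F i"] by (metis of_real_eq_iff)
  qed
  also have "\<dots> = m * \<alpha>" by simp
  finally have "real m * \<alpha> \<le> real (d^2) * \<alpha>" using le by simp
  then have "real m \<le> real (d^2)" using al by simp
  then show ?thesis by linarith
qed

lemma MUB_down: "MUB_family d m B \<Longrightarrow> K \<le> m \<Longrightarrow> MUB_family d K B"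
  by (auto simp: MUB_family_def)

lemma exists_MUB:
  assumes d: "2 \<le> d" and K: "K \<le> max_MUB d"
  shows "\<exists>B. MUB_family d K B"
proof -
  have "\<exists>B. MUB_family d (max_MUB d) B"
    unfolding max_MUB_def
  proof (rule GreatestI_ex_nat)
    show "\<exists>k B. MUB_family d k B" by (rule exI[of _ 0]) (simp add: MUB_family_def)
    show "y \<le> d^2" if "\<exists>B. MUB_family d y B" for y using that mub_bound[OF d] by blast
  qed
  then show ?thesis using K MUB_down by blast
qed



lemma digit_less: "0 < d \<Longrightarrow> digit d l x < d" by (simp add: digit_def)

lemma regroup:
  fixes F :: "nat \<Rightarrow> nat \<Rightarrow> 'a::comm_monoid_add"
  assumes d: "0 < d"
  shows "(\<Sum>r<d. \<Sum>i\<in>{i. i < n \<and> digit d j i = r}. F i r) = (\<Sum>i<n. F i (digit d j i))"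
proof -
  have inner_f: "(\<Sum>i\<in>{i. i < n \<and> digit d j i = r}. F i r) = (\<Sum>i<n. if digit d j i = r then F i r else 0)" for r
  proof -
    have se: "{i. i < n \<and> digit d j i = r} = {i \<in> {..<n}. digit d j i = r}" by auto
    show ?thesis unfolding se by (rule sum.inter_filter) simp
  qed
  have "(\<Sum>r<d. \<Sum>i\<in>{i. i < n \<and> digit d j i = r}. F i r)
      = (\<Sum>r<d. \<Sum>i<n. if digit d j i = r then F i r else 0)"
    by (rule sum.cong[OF refl], rule inner_f)
  also have "\<dots> = (\<Sum>i<n. \<Sum>r<d. if digit d j i = r then F i r else 0)" by (rule sum.swap)
  also have "\<dots> = (\<Sum>i<n. F i (digit d j i))"
  proof (intro sum.cong refl)
    fix i
    show "(\<Sum>r<d. if digit d j i = r then F i r else 0) = F i (digit d j i)"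
      using sum.delta[of "{..<d}" "digit d j i" "\<lambda>r. F i r"] digit_less[OF d, of j i]
      by (simp add: eq_commute[of "digit d j i"])
  qed
  finally show ?thesis .
qed

lemma onb_complete':
  assumes onb: "orthonormal_basis d b" and r: "r < d" and s: "s < d"
  shows "(\<Sum>k<d. cnj (b k $ r) * b k $ s) = (if r = s then 1 else 0)"
proof -
  have e: "(\<Sum>k<d. cnj (b k $ r) * b k $ s) = cnj (\<Sum>k<d. b k $ r * cnj (b k $ s))"
    by (simp add: cnj_sum mult.commute)
  show ?thesis unfolding e onb_complete[OF onb r s] by simp
qed

lemma prod_indicator:
  fixes P :: "nat \<Rightarrow> bool"
  assumes "finite A"
  shows "(\<Prod>l\<in>A. if P l then (1::complex) else 0) = (if \<forall>l\<in>A. P l then 1 else 0)"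
proof (cases "\<forall>l\<in>A. P l")
  case True then show ?thesis by simp
next
  case False
  then obtain l where "l \<in> A" "\<not> P l" by blast
  then show ?thesis using assms False by (subst prod_zero) auto
qed

definition Lf :: "nat \<Rightarrow> (nat \<Rightarrow> complex) \<Rightarrow> complex mat \<Rightarrow> complex" where
  "Lf n e A = (\<Sum>p<n. \<Sum>q<n. cnj (e p) * (A $$ (p,q) * e q))"

lemma cinner_Lf: "A \<in> carrier_mat n n \<Longrightarrow> cinner n (vec n e) (A *\<^sub>v vec n e) = Lf n e A"
  by (simp add: cinner_mat Lf_def sum_distrib_left)

lemma ptrace:
  fixes B :: "nat \<Rightarrow> nat \<Rightarrow> complex vec"
  assumes d: "0 < d" and j: "j < K" and k: "k < d"
    and onb: "\<forall>l<K. orthonormal_basis d (B l)"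
    and M: "M \<in> carrier_mat (d^K) (d^K)"
  shows "(\<Sum>i\<in>{i. i < d^K \<and> digit d j i = k}. Lf (d^K) (\<lambda>p. \<Prod>l<K. B l (digit d l i) $ (digit d l p)) M)
       = cinner d (B j k) (marginal d K j M *\<^sub>v B j k)"
proof -
  let ?n = "d^K"
  define ef where "ef i p = (\<Prod>l<K. B l (digit d l i) $ (digit d l p))" for i p
  define b where "b = B j k"
  define Q where "Q p q = (\<forall>l<K. l \<noteq> j \<longrightarrow> digit d l q = digit d l p)" for p q
  have inner: "(\<Sum>i\<in>{i. i < ?n \<and> digit d j i = k}. cnj (ef i p) * ef i q)
      = (if Q p q then cnj (b $ digit d j p) * b $ digit d j q else 0)" for p q
  proof -
    define g where "g l x = (if l = j \<and> x \<noteq> k then 0 else cnj (B l x $ digit d l p) * B l x $ digit d l q)" for l x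
    have "(\<Sum>i\<in>{i. i < ?n \<and> digit d j i = k}. cnj (ef i p) * ef i q)
        = (\<Sum>i<?n. if digit d j i = k then cnj (ef i p) * ef i q else 0)"
    proof -
      have se: "{i. i < ?n \<and> digit d j i = k} = {i \<in> {..<?n}. digit d j i = k}" by auto
      show ?thesis unfolding se by (rule sum.inter_filter) simp
    qed
    also have "\<dots> = (\<Sum>i<?n. \<Prod>l<K. g l (digit d l i))"
    proof (intro sum.cong refl)
      fix i
      show "(if digit d j i = k then cnj (ef i p) * ef i q else 0) = (\<Prod>l<K. g l (digit d l i))"
      proof (cases "digit d j i = k")
        case True
        then have "(\<Prod>l<K. g l (digit d l i)) = (\<Prod>l<K. cnj (B l (digit d l i) $ digit d l p) * B l (digit d l i) $ digit d l q)"
          by (intro prod.cong refl) (auto simp: g_def)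
        also have "\<dots> = cnj (ef i p) * ef i q" by (simp add: ef_def prod.distrib cnj_prod)
        finally show ?thesis using True by simp
      next
        case False
        have "(\<Prod>l<K. g l (digit d l i)) = 0"
          by (rule prod_zero) (use j False in \<open>auto simp: g_def\<close>)
        then show ?thesis using False by simp
      qed
    qed
    also have "\<dots> = (\<Prod>l<K. \<Sum>x<d. g l x)" by (rule sum_prod_digits)
    also have "\<dots> = (\<Prod>l<K. if l = j then cnj (b $ digit d j p) * b $ digit d j q
                        else (if digit d l p = digit d l q then 1 else 0))"
    proof (intro prod.cong refl)
      fix l assume l: "l \<in> {..<K}"
      show "(\<Sum>x<d. g l x) = (if l = j then cnj (b $ digit d j p) * b $ digit d j q
                        else (if digit d l p = digit d l q then 1 else 0))"
      proof (cases "l = j")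
        case True
        have "(\<Sum>x<d. g l x) = (\<Sum>x<d. if x = k then cnj (B j k $ digit d j p) * B j k $ digit d j q else 0)"
          by (rule sum.cong[OF refl]) (simp add: g_def True)
        also have "\<dots> = cnj (B j k $ digit d j p) * B j k $ digit d j q" using k by simp
        finally show ?thesis using True by (simp add: b_def)
      next
        case False
        then show ?thesis using onb_complete'[of d "B l" "digit d l p" "digit d l q"] onb l digit_less[OF d]
          by (simp add: g_def)
      qed
    qed
    also have "\<dots> = cnj (b $ digit d j p) * b $ digit d j q * (\<Prod>l\<in>{..<K} - {j}. if digit d l p = digit d l q then 1 else 0)"
    proof -
      let ?H = "\<lambda>l. if l = j then cnj (b $ digit d j p) * b $ digit d j q
                        else (if digit d l p = digit d l q then (1::complex) else 0)"
      have r: "(\<Prod>l<K. ?H l) = ?H j * (\<Prod>l\<in>{..<K} - {j}. ?H l)"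
        by (rule prod.remove) (use j in auto)
      have c: "(\<Prod>l\<in>{..<K} - {j}. ?H l) = (\<Prod>l\<in>{..<K} - {j}. if digit d l p = digit d l q then 1 else 0)"
        by (rule prod.cong) auto
      show ?thesis using r c by simp
    qed
    also have "\<dots> = (if Q p q then cnj (b $ digit d j p) * b $ digit d j q else 0)"
      by (subst prod_indicator) (auto simp: Q_def)
    finally show ?thesis .
  qed
  have lhs: "(\<Sum>i\<in>{i. i < ?n \<and> digit d j i = k}. Lf ?n (ef i) M)
      = (\<Sum>p<?n. \<Sum>q<?n. M $$ (p,q) * (if Q p q then cnj (b $ digit d j p) * b $ digit d j q else 0))"
  proof -
    have "(\<Sum>i\<in>{i. i < ?n \<and> digit d j i = k}. Lf ?n (ef i) M)
        = (\<Sum>p<?n. \<Sum>q<?n. \<Sum>i\<in>{i. i < ?n \<and> digit d j i = k}. M $$ (p,q) * (cnj (ef i p) * ef i q))"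
    proof -
      have "(\<Sum>i\<in>{i. i < ?n \<and> digit d j i = k}. Lf ?n (ef i) M)
         = (\<Sum>i\<in>{i. i < ?n \<and> digit d j i = k}. \<Sum>p<?n. \<Sum>q<?n. M $$ (p,q) * (cnj (ef i p) * ef i q))"
        unfolding Lf_def by (simp add: mult_ac)
      also have "\<dots> = (\<Sum>p<?n. \<Sum>i\<in>{i. i < ?n \<and> digit d j i = k}. \<Sum>q<?n. M $$ (p,q) * (cnj (ef i p) * ef i q))"
        by (rule sum.swap)
      also have "\<dots> = (\<Sum>p<?n. \<Sum>q<?n. \<Sum>i\<in>{i. i < ?n \<and> digit d j i = k}. M $$ (p,q) * (cnj (ef i p) * ef i q))"
        by (rule sum.cong[OF refl], rule sum.swap)
      finally show ?thesis .
    qed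
    also have "\<dots> = (\<Sum>p<?n. \<Sum>q<?n. M $$ (p,q) * (if Q p q then cnj (b $ digit d j p) * b $ digit d j q else 0))"
    proof (rule sum.cong[OF refl], rule sum.cong[OF refl])
      fix p q
      show "(\<Sum>i\<in>{i. i < ?n \<and> digit d j i = k}. M $$ (p,q) * (cnj (ef i p) * ef i q))
         = M $$ (p,q) * (if Q p q then cnj (b $ digit d j p) * b $ digit d j q else 0)"
        by (simp only: sum_distrib_left[symmetric] inner)
    qed
    finally show ?thesis .
  qed
  have step3: "(\<Sum>q<?n. M $$ (p,q) * (if Q p q then cnj (b $ digit d j p) * b $ digit d j q else 0))
      = (\<Sum>s<d. M $$ (p, upd d j p s) * (cnj (b $ digit d j p) * b $ s))" if p: "p < ?n" for p
  proof -
    define G where "G q = M $$ (p,q) * (cnj (b $ digit d j p) * b $ digit d j q)" for q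
    have set: "{q \<in> {..<?n}. Q p q} = upd d j p ` {..<d}"
    proof
      show "{q \<in> {..<?n}. Q p q} \<subseteq> upd d j p ` {..<d}"
      proof clarify
        fix q assume q: "q < ?n" "Q p q"
        then have "q = upd d j p (digit d j q)" using upd_char[OF d p _ j] by (simp add: Q_def)
        moreover have "digit d j q < d" by (rule digit_less[OF d])
        ultimately show "q \<in> upd d j p ` {..<d}" by blast
      qed
    next
      show "upd d j p ` {..<d} \<subseteq> {q \<in> {..<?n}. Q p q}"
        using upd_less[OF d _ p j] digit_upd[OF d] by (auto simp: Q_def)
    qed
    have inj: "inj_on (upd d j p) {..<d}"
    proof (rule inj_onI)
      fix s s' assume ss: "s \<in> {..<d}" "s' \<in> {..<d}" and eq: "upd d j p s = upd d j p s'"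
      have "s = digit d j (upd d j p s)" using digit_upd[OF d, of s j j p] ss by simp
      also have "\<dots> = digit d j (upd d j p s')" by (simp only: eq)
      also have "\<dots> = s'" using digit_upd[OF d, of s' j j p] ss by simp
      finally show "s = s'" .
    qed
    have "(\<Sum>q<?n. M $$ (p,q) * (if Q p q then cnj (b $ digit d j p) * b $ digit d j q else 0))
        = (\<Sum>q<?n. if Q p q then G q else 0)" by (intro sum.cong refl) (simp add: G_def)
    also have "\<dots> = sum G {q \<in> {..<?n}. Q p q}" by (rule sum.inter_filter[symmetric]) simp
    also have "\<dots> = sum G (upd d j p ` {..<d})" by (simp only: set)
    also have "\<dots> = (\<Sum>s<d. G (upd d j p s))" by (simp add: sum.reindex[OF inj])
    also have "\<dots> = (\<Sum>s<d. M $$ (p, upd d j p s) * (cnj (b $ digit d j p) * b $ s))"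
      by (intro sum.cong refl) (simp add: G_def digit_upd[OF d])
    finally show ?thesis .
  qed
  have bc: "b \<in> carrier_vec d" using onb j k by (simp add: orthonormal_basis_def b_def)
  have mc: "marginal d K j M \<in> carrier_mat d d" by (simp add: marginal_def)
  have marg: "marginal d K j M $$ (r,s) = (\<Sum>i\<in>{i. i < ?n \<and> digit d j i = r}. M $$ (i, upd d j i s))"
    if "r < d" "s < d" for r s
    using that by (simp add: marginal_def upd_def)
  have "cinner d b (marginal d K j M *\<^sub>v b)
      = (\<Sum>r<d. cnj (b $ r) * (\<Sum>s<d. marginal d K j M $$ (r,s) * b $ s))"
    by (rule cinner_mat[OF mc bc])
  also have "\<dots> = (\<Sum>r<d. \<Sum>i\<in>{i. i < ?n \<and> digit d j i = r}. \<Sum>s<d. cnj (b $ r) * (M $$ (i, upd d j i s) * b $ s))"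
  proof (rule sum.cong[OF refl])
    fix r assume r: "r \<in> {..<d}"
    have "(\<Sum>s<d. marginal d K j M $$ (r,s) * b $ s)
        = (\<Sum>s<d. \<Sum>i\<in>{i. i < ?n \<and> digit d j i = r}. M $$ (i, upd d j i s) * b $ s)"
      by (rule sum.cong[OF refl]) (use r in \<open>simp add: marg sum_distrib_right\<close>)
    then have "cnj (b $ r) * (\<Sum>s<d. marginal d K j M $$ (r,s) * b $ s)
        = (\<Sum>s<d. \<Sum>i\<in>{i. i < ?n \<and> digit d j i = r}. cnj (b $ r) * (M $$ (i, upd d j i s) * b $ s))"
      by (simp add: sum_distrib_left)
    also have "\<dots> = (\<Sum>i\<in>{i. i < ?n \<and> digit d j i = r}. \<Sum>s<d. cnj (b $ r) * (M $$ (i, upd d j i s) * b $ s))"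
      by (rule sum.swap)
    finally show "cnj (b $ r) * (\<Sum>s<d. marginal d K j M $$ (r,s) * b $ s)
        = (\<Sum>i\<in>{i. i < ?n \<and> digit d j i = r}. \<Sum>s<d. cnj (b $ r) * (M $$ (i, upd d j i s) * b $ s))" .
  qed
  also have "\<dots> = (\<Sum>i<?n. \<Sum>s<d. cnj (b $ digit d j i) * (M $$ (i, upd d j i s) * b $ s))"
    by (rule regroup[OF d])
  also have "\<dots> = (\<Sum>p<?n. \<Sum>q<?n. M $$ (p,q) * (if Q p q then cnj (b $ digit d j p) * b $ digit d j q else 0))"
  proof (rule sum.cong[OF refl])
    fix p assume "p \<in> {..<?n}"
    then show "(\<Sum>s<d. cnj (b $ digit d j p) * (M $$ (p, upd d j p s) * b $ s))
      = (\<Sum>q<?n. M $$ (p,q) * (if Q p q then cnj (b $ digit d j p) * b $ digit d j q else 0))"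
      using step3[of p] by (simp add: mult_ac)
  qed
  moreover have efe: "ef i = (\<lambda>p. \<Prod>l<K. B l (digit d l i) $ (digit d l p))" for i
    by (rule ext) (simp add: ef_def)
  ultimately show ?thesis using lhs by (simp add: efe b_def)
qed



lemma onb_trace:
  assumes onb: "orthonormal_basis d b" and A: "A \<in> carrier_mat d d"
  shows "(\<Sum>k<d. cinner d (b k) (A *\<^sub>v b k)) = mtrace d A"
proof -
  have bc: "b k \<in> carrier_vec d" if "k < d" for k using onb that by (simp add: orthonormal_basis_def)
  have "(\<Sum>k<d. cinner d (b k) (A *\<^sub>v b k)) = (\<Sum>k<d. \<Sum>r<d. \<Sum>s<d. A $$ (r,s) * (cnj (b k $ r) * b k $ s))"
    by (rule sum.cong[OF refl]) (simp add: cinner_mat[OF A bc] sum_distrib_left mult_ac)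
  also have "\<dots> = (\<Sum>r<d. \<Sum>k<d. \<Sum>s<d. A $$ (r,s) * (cnj (b k $ r) * b k $ s))"
    by (rule sum.swap)
  also have "\<dots> = (\<Sum>r<d. \<Sum>s<d. \<Sum>k<d. A $$ (r,s) * (cnj (b k $ r) * b k $ s))"
    by (rule sum.cong[OF refl], rule sum.swap)
  also have "\<dots> = (\<Sum>r<d. \<Sum>s<d. A $$ (r,s) * (if r = s then 1 else 0))"
  proof (rule sum.cong[OF refl], rule sum.cong[OF refl])
    fix r s assume "r \<in> {..<d}" "s \<in> {..<d}"
    then show "(\<Sum>k<d. A $$ (r,s) * (cnj (b k $ r) * b k $ s)) = A $$ (r,s) * (if r = s then 1 else 0)"
      using onb_complete'[OF onb, of r s] by (simp only: sum_distrib_left[symmetric] lessThan_iff)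
  qed
  also have "\<dots> = mtrace d A" by (simp add: mtrace_def if_distrib cong: if_cong)
  finally show ?thesis .
qed


lemma full_trace:
  fixes B :: "nat \<Rightarrow> nat \<Rightarrow> complex vec"
  assumes d: "0 < d" and K: "0 < K"
    and onb: "\<forall>l<K. orthonormal_basis d (B l)"
    and M: "M \<in> carrier_mat (d^K) (d^K)"
  shows "(\<Sum>i<d^K. Lf (d^K) (\<lambda>p. \<Prod>l<K. B l (digit d l i) $ (digit d l p)) M) = mtrace (d^K) M"
proof -
  let ?n = "d^K"
  let ?e = "\<lambda>i p. \<Prod>l<K. B l (digit d l i) $ (digit d l p)"
  have "(\<Sum>i<?n. Lf ?n (?e i) M) = (\<Sum>r<d. \<Sum>i\<in>{i. i < ?n \<and> digit d 0 i = r}. Lf ?n (?e i) M)"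
    by (rule regroup[OF d, symmetric])
  also have "\<dots> = (\<Sum>r<d. cinner d (B 0 r) (marginal d K 0 M *\<^sub>v B 0 r))"
    by (rule sum.cong[OF refl], rule ptrace[OF d K _ onb M]) simp
  also have "\<dots> = mtrace d (marginal d K 0 M)"
    by (rule onb_trace) (use onb K in \<open>simp_all add: marginal_def\<close>)
  also have "\<dots> = (\<Sum>r<d. \<Sum>i\<in>{i. i < ?n \<and> digit d 0 i = r}. M $$ (i, upd d 0 i r))"
    by (simp add: mtrace_def marginal_def upd_def)
  also have "\<dots> = (\<Sum>i<?n. M $$ (i, upd d 0 i (digit d 0 i)))"
    by (rule regroup[OF d])
  also have "\<dots> = mtrace ?n M" by (simp add: upd_self mtrace_def)
  finally show ?thesis .
qed

definition Pj :: "nat \<Rightarrow> complex vec \<Rightarrow> complex mat" where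
  "Pj d b = mat d d (\<lambda>(r,s). b $ r * cnj (b $ s))"

lemma Phi_val:
  assumes d: "0 < d" and bc: "b \<in> carrier_vec d" and unit: "cinner d b b = 1"
  shows "cinner d b (Phi_t d t (Pj d b) *\<^sub>v b) = of_real (t + (1 - t) / d)"
proof -
  have tr: "mtrace d (Pj d b) = 1"
  proof -
    have "mtrace d (Pj d b) = (\<Sum>r<d. cnj (b $ r) * b $ r)" by (simp add: mtrace_def Pj_def mult.commute)
    then show ?thesis using unit by (simp add: cinner_def)
  qed
  define a where "a = complex_of_real (1 - t) * mtrace d (Pj d b) / of_nat d"
  have Pc: "Phi_t d t (Pj d b) \<in> carrier_mat d d" by (simp add: Phi_t_def Pj_def)
  have ent: "Phi_t d t (Pj d b) $$ (r,s) = of_real t * (b $ r * cnj (b $ s)) + (if r = s then a else 0)"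
    if "r < d" "s < d" for r s using that by (simp add: Phi_t_def Pj_def a_def)
  have "cinner d b (Phi_t d t (Pj d b) *\<^sub>v b)
      = (\<Sum>r<d. cnj (b $ r) * (\<Sum>s<d. (of_real t * (b $ r * cnj (b $ s)) + (if r = s then a else 0)) * b $ s))"
    by (simp add: cinner_mat[OF Pc bc] ent)
  also have "\<dots> = (\<Sum>r<d. of_real t * (cnj (b $ r) * b $ r) * (\<Sum>s<d. cnj (b $ s) * b $ s) + a * (cnj (b $ r) * b $ r))"
  proof (rule sum.cong[OF refl])
    fix r assume r: "r \<in> {..<d}"
    have "(\<Sum>s<d. (of_real t * (b $ r * cnj (b $ s)) + (if r = s then a else 0)) * b $ s)
        = (\<Sum>s<d. of_real t * (b $ r * cnj (b $ s)) * b $ s) + (\<Sum>s<d. (if r = s then a else 0) * b $ s)"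
      by (simp only: sum.distrib distrib_right)
    also have "(\<Sum>s<d. (if r = s then a else 0) * b $ s) = (\<Sum>s<d. if r = s then a * b $ r else 0)"
      by (rule sum.cong) auto
    also have "\<dots> = a * b $ r" using r by simp
    also have "(\<Sum>s<d. of_real t * (b $ r * cnj (b $ s)) * b $ s) = of_real t * b $ r * (\<Sum>s<d. cnj (b $ s) * b $ s)"
      by (simp add: sum_distrib_left mult_ac)
    finally show "cnj (b $ r) * (\<Sum>s<d. (of_real t * (b $ r * cnj (b $ s)) + (if r = s then a else 0)) * b $ s)
        = of_real t * (cnj (b $ r) * b $ r) * (\<Sum>s<d. cnj (b $ s) * b $ s) + a * (cnj (b $ r) * b $ r)"
      by (simp add: algebra_simps)
  qed
  also have "\<dots> = of_real t + a"
    using unit by (simp add: sum.distrib sum_distrib_left[symmetric] cinner_def)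
  also have "\<dots> = of_real (t + (1 - t) / d)" by (simp add: a_def tr)
  finally show ?thesis .
qed

lemma channel_pos:
  assumes ch: "channel d m Psi" and Y: "psd d Y"
  shows "psd m (Psi Y)"
proof -
  have Yc: "Y \<in> carrier_mat d d" using Y by (simp add: psd_def)
  have "\<forall>k X. psd (k * d) X \<longrightarrow> psd (k * m) (id_tensor k d m Psi X)" using ch by (simp add: channel_def)
  from this[rule_format, of 1 Y] have "psd m (id_tensor 1 d m Psi Y)" using Y by (simp only: mult_1)
  moreover have PYc: "Psi Y \<in> carrier_mat m m" using ch Yc by (simp add: channel_def)
  moreover have "id_tensor 1 d m Psi Y = Psi Y"
  proof (rule eq_matI)
    fix i j assume "i < dim_row (Psi Y)" "j < dim_col (Psi Y)"
    then have ij: "i < m" "j < m" using PYc by auto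
    have "mat d d (\<lambda>(r,s). Y $$ ((i div m) * d + r, (j div m) * d + s)) = Y"
      using ij Yc by (intro eq_matI) auto
    then show "id_tensor 1 d m Psi Y $$ (i,j) = Psi Y $$ (i,j)" using ij by (simp add: id_tensor_def)
  qed (use PYc in \<open>simp_all add: id_tensor_def\<close>)
  ultimately show ?thesis by simp
qed



fun msum :: "nat \<Rightarrow> (nat \<Rightarrow> complex mat) \<Rightarrow> nat \<Rightarrow> complex mat" where
  "msum n G 0 = 0\<^sub>m n n"
| "msum n G (Suc m) = msum n G m + G m"

lemma msum_carrier: "(\<forall>j<m. G j \<in> carrier_mat n n) \<Longrightarrow> msum n G m \<in> carrier_mat n n"
  by (induction m) auto

lemma msum_index: "(\<forall>j<m. G j \<in> carrier_mat n n) \<Longrightarrow> r < n \<Longrightarrow> s < n \<Longrightarrow>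
    msum n G m $$ (r,s) = (\<Sum>j<m. G j $$ (r,s))"
proof (induction m)
  case 0 then show ?case by simp
next
  case (Suc m)
  have "msum n G m \<in> carrier_mat n n" using Suc.prems by (intro msum_carrier) auto
  then show ?case using Suc by auto
qed

lemma channel_msum:
  assumes ch: "channel d n Psi"
  shows "(\<forall>j<m. G j \<in> carrier_mat d d) \<Longrightarrow> Psi (msum d G m) = msum n (\<lambda>j. Psi (G j)) m"
proof (induction m)
  case 0
  have z: "0\<^sub>m d d = (0::complex) \<cdot>\<^sub>m (0\<^sub>m d d :: complex mat)" by (intro eq_matI) auto
  have "Psi (0\<^sub>m d d) = 0 \<cdot>\<^sub>m Psi (0\<^sub>m d d)" using ch z by (metis channel_def zero_carrier_mat)
  moreover have "Psi (0\<^sub>m d d) \<in> carrier_mat n n" using ch by (simp add: channel_def)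
  moreover have "(0::complex) \<cdot>\<^sub>m A = 0\<^sub>m n n" if "A \<in> carrier_mat n n" for A
    using that by (intro eq_matI) auto
  ultimately have "Psi (0\<^sub>m d d) = 0\<^sub>m n n" by metis
  then show ?case by simp
next
  case (Suc m)
  have "msum d G m \<in> carrier_mat d d" using Suc.prems by (intro msum_carrier) auto
  moreover have "G m \<in> carrier_mat d d" using Suc.prems by simp
  ultimately have "Psi (msum d G m + G m) = Psi (msum d G m) + Psi (G m)" using ch by (simp add: channel_def)
  then show ?case using Suc by simp
qed

lemma Lf_lin:
  assumes "\<forall>p<n. \<forall>q<n. A $$ (p,q) = c * A1 $$ (p,q) - (\<Sum>j<K. A2 j $$ (p,q))"
  shows "Lf n e A = c * Lf n e A1 - (\<Sum>j<K. Lf n e (A2 j))"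
proof -
  have "Lf n e A = (\<Sum>p<n. \<Sum>q<n. c * (cnj (e p) * (A1 $$ (p,q) * e q)) - (\<Sum>j<K. cnj (e p) * (A2 j $$ (p,q) * e q)))"
    unfolding Lf_def
    by (intro sum.cong refl) (simp add: assms algebra_simps sum_distrib_left sum_distrib_right)
  also have "\<dots> = c * Lf n e A1 - (\<Sum>p<n. \<Sum>q<n. \<Sum>j<K. cnj (e p) * (A2 j $$ (p,q) * e q))"
    by (simp add: Lf_def sum_subtractf sum_distrib_left)
  also have "(\<Sum>p<n. \<Sum>q<n. \<Sum>j<K. cnj (e p) * (A2 j $$ (p,q) * e q))
      = (\<Sum>p<n. \<Sum>j<K. \<Sum>q<n. cnj (e p) * (A2 j $$ (p,q) * e q))"
    by (rule sum.cong[OF refl], rule sum.swap)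
  also have "\<dots> = (\<Sum>j<K. \<Sum>p<n. \<Sum>q<n. cnj (e p) * (A2 j $$ (p,q) * e q))"
    by (rule sum.swap)
  also have "\<dots> = (\<Sum>j<K. Lf n e (A2 j))" by (simp add: Lf_def)
  finally show ?thesis .
qed

lemma Lf_one: "Lf d e (1\<^sub>m d) = of_real (nrm d e)"
proof -
  have "Lf d e (1\<^sub>m d) = (\<Sum>p<d. \<Sum>q<d. if p = q then cnj (e p) * e p else 0)"
    unfolding Lf_def by (intro sum.cong refl) auto
  also have "\<dots> = ip d e e" by (simp add: sum_delta_2 ip_def)
  finally show ?thesis by (simp add: ip_self)
qed

lemma Lf_Pj: "Lf d e (Pj d u) = of_real ((cmod (ip d (\<lambda>r. u $ r) e))^2)"
proof -
  have "Lf d e (Pj d u) = (\<Sum>p<d. \<Sum>q<d. (cnj (e p) * u $ p) * (cnj (u $ q) * e q))"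
    unfolding Lf_def Pj_def by (intro sum.cong refl) (auto simp: mult_ac)
  also have "\<dots> = cnj (ip d (\<lambda>r. u $ r) e) * ip d (\<lambda>r. u $ r) e"
    by (simp add: ip_def sum_product cnj_sum mult.commute, rule sum.swap)
  also have "\<dots> = of_real ((cmod (ip d (\<lambda>r. u $ r) e))^2)"
    by (simp only: complex_norm_square mult.commute)
  finally show ?thesis .
qed



lemma Y_psd:
  fixes u :: "nat \<Rightarrow> complex vec" and cc :: real
  assumes d: "0 < d" and uc: "\<forall>j<K. u j \<in> carrier_vec d"
    and unit: "\<forall>j<K. cinner d (u j) (u j) = 1"
    and unb: "\<forall>i<K. \<forall>j<K. i \<noteq> j \<longrightarrow> (cmod (cinner d (u i) (u j)))^2 = 1 / d"
    and cc: "cc = (K + sqrt K * (d - 1)) / d"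
  shows "psd d (of_real cc \<cdot>\<^sub>m 1\<^sub>m d + (-1) \<cdot>\<^sub>m msum d (\<lambda>j. Pj d (u j)) K)"
proof -
  let ?Y = "of_real cc \<cdot>\<^sub>m 1\<^sub>m d + (-1) \<cdot>\<^sub>m msum d (\<lambda>j. Pj d (u j)) K"
  have Pc: "\<forall>j<K. Pj d (u j) \<in> carrier_mat d d" by (simp add: Pj_def)
  have Ms: "msum d (\<lambda>j. Pj d (u j)) K \<in> carrier_mat d d" by (rule msum_carrier[OF Pc])
  have Yc: "?Y \<in> carrier_mat d d" using Ms by simp
  define u' where "u' j = (\<lambda>r. u j $ r)" for j
  have nu: "\<forall>j<K. nrm d (u' j) = 1"
  proof (intro allI impI)
    fix j assume "j < K"
    then have "of_real (nrm d (u' j)) = (1::complex)" using unit by (simp add: cinner_ip u'_def ip_self)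
    then show "nrm d (u' j) = 1" by (metis of_real_eq_1_iff)
  qed
  have ub: "\<forall>i<K. \<forall>j<K. i \<noteq> j \<longrightarrow> (cmod (ip d (u' i) (u' j)))^2 = 1 / d"
    using unb by (simp add: cinner_ip u'_def)
  have "\<forall>v\<in>carrier_vec d. cinner d v (?Y *\<^sub>v v) \<in> \<real> \<and> 0 \<le> Re (cinner d v (?Y *\<^sub>v v))"
  proof
    fix v :: "complex vec" assume vc: "v \<in> carrier_vec d"
    define vf where "vf = (\<lambda>r. v $ r)"
    have vv: "v = vec d vf" using vc by (intro eq_vecI) (auto simp: vf_def)
    have "cinner d v (?Y *\<^sub>v v) = Lf d vf ?Y" unfolding vv by (rule cinner_Lf[OF Yc])
    also have "\<dots> = of_real cc * Lf d vf (1\<^sub>m d) - (\<Sum>j<K. Lf d vf (Pj d (u j)))"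
    proof (rule Lf_lin, intro allI impI)
      fix p q assume pq: "p < d" "q < d"
      have dims: "dim_row (msum d (\<lambda>j. Pj d (u j)) K) = d" "dim_col (msum d (\<lambda>j. Pj d (u j)) K) = d"
        using Ms by auto
      show "?Y $$ (p,q) = of_real cc * 1\<^sub>m d $$ (p,q) - (\<Sum>j<K. Pj d (u j) $$ (p,q))"
        using pq by (simp add: dims msum_index[OF Pc])
    qed
    also have "\<dots> = of_real (cc * nrm d vf - (\<Sum>j<K. (cmod (ip d (u' j) vf))^2))"
      by (simp add: Lf_one Lf_Pj u'_def)
    finally have eq: "cinner d v (?Y *\<^sub>v v) = of_real (cc * nrm d vf - (\<Sum>j<K. (cmod (ip d (u' j) vf))^2))" .
    have "(\<Sum>j<K. (cmod (ip d (u' j) vf))^2) \<le> cc * nrm d vf"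
      using mub_ineq[OF d nu ub, of vf] cc d by (simp add: of_nat_diff)
    then show "cinner d v (?Y *\<^sub>v v) \<in> \<real> \<and> 0 \<le> Re (cinner d v (?Y *\<^sub>v v))"
      unfolding eq by simp
  qed
  then show ?thesis using Yc by (simp add: psd_def)
qed


lemma core:
  fixes B :: "nat \<Rightarrow> nat \<Rightarrow> complex vec" and t :: real
  assumes d2: "2 \<le> d" and K: "0 < K" and mub: "MUB_family d K B"
    and ch: "channel d (d^K) Psi"
    and marg: "\<forall>j<K. \<forall>X\<in>carrier_mat d d. marginal d K j (Psi X) = Phi_t d t X"
  shows "t \<le> 1 / sqrt K"
proof -
  have d: "0 < d" using d2 by simp
  let ?n = "d^K"
  define e where "e i = (\<lambda>p. \<Prod>l<K. B l (digit d l i) $ (digit d l p))" for i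
  define cc where "cc = (real K + sqrt (real K) * (real d - 1)) / real d"
  define P where "P j k = Pj d (B j k)" for j k
  define Y where "Y i = of_real cc \<cdot>\<^sub>m 1\<^sub>m d + (-1) \<cdot>\<^sub>m msum d (\<lambda>j. P j (digit d j i)) K" for i
  have onb: "\<forall>l<K. orthonormal_basis d (B l)" using mub by (simp add: MUB_family_def)
  have Bc: "B l k \<in> carrier_vec d" if "l < K" "k < d" for l k
    using onb that by (simp add: orthonormal_basis_def)
  have Bu: "cinner d (B l k) (B l k) = 1" if "l < K" "k < d" for l k
    using onb that by (simp add: orthonormal_basis_def)
  have Pc: "P j k \<in> carrier_mat d d" for j k by (simp add: P_def Pj_def)
  have Yc: "Y i \<in> carrier_mat d d" for i
    using msum_carrier[of K "\<lambda>j. P j (digit d j i)" d] Pc by (simp add: Y_def)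
  have psdY: "psd d (Y i)" for i
    unfolding Y_def P_def
  proof (rule Y_psd[OF d _ _ _ cc_def])
    show "\<forall>j<K. B j (digit d j i) \<in> carrier_vec d" using Bc digit_less[OF d] by simp
    show "\<forall>j<K. cinner d (B j (digit d j i)) (B j (digit d j i)) = 1" using Bu digit_less[OF d] by simp
    show "\<forall>ia<K. \<forall>j<K. ia \<noteq> j \<longrightarrow> (cmod (cinner d (B ia (digit d ia i)) (B j (digit d j i))))^2 = 1 / d"
      using mub digit_less[OF d] by (simp add: MUB_family_def)
  qed
  have PsiYc: "Psi X \<in> carrier_mat ?n ?n" if "X \<in> carrier_mat d d" for X
    using ch that by (simp add: channel_def)
  have nonneg: "0 \<le> Re (Lf ?n (e i) (Psi (Y i)))" for i
  proof -
    have "psd ?n (Psi (Y i))" by (rule channel_pos[OF ch psdY])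
    moreover have "vec ?n (e i) \<in> carrier_vec ?n" by simp
    ultimately have "0 \<le> Re (cinner ?n (vec ?n (e i)) (Psi (Y i) *\<^sub>v vec ?n (e i)))"
      by (simp add: psd_def)
    then show ?thesis by (simp add: cinner_Lf[OF PsiYc[OF Yc]])
  qed
  have lin: "Lf ?n (e i) (Psi (Y i)) = of_real cc * Lf ?n (e i) (Psi (1\<^sub>m d))
      - (\<Sum>j<K. Lf ?n (e i) (Psi (P j (digit d j i))))" for i
  proof (rule Lf_lin, intro allI impI)
    fix p q assume pq: "p < ?n" "q < ?n"
    have Pc': "\<forall>j<K. P j (digit d j i) \<in> carrier_mat d d" using Pc by simp
    have Ms: "msum d (\<lambda>j. P j (digit d j i)) K \<in> carrier_mat d d" by (rule msum_carrier[OF Pc'])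
    have PsiPc: "\<forall>j<K. Psi (P j (digit d j i)) \<in> carrier_mat ?n ?n" using PsiYc Pc by simp
    have "Psi (Y i) = Psi (of_real cc \<cdot>\<^sub>m 1\<^sub>m d) + Psi ((-1) \<cdot>\<^sub>m msum d (\<lambda>j. P j (digit d j i)) K)"
      using ch Ms by (simp add: channel_def Y_def)
    also have "\<dots> = of_real cc \<cdot>\<^sub>m Psi (1\<^sub>m d) + (-1) \<cdot>\<^sub>m msum ?n (\<lambda>j. Psi (P j (digit d j i))) K"
      using ch Ms channel_msum[OF ch Pc'] by (simp add: channel_def)
    finally have eq: "Psi (Y i) = of_real cc \<cdot>\<^sub>m Psi (1\<^sub>m d) + (-1) \<cdot>\<^sub>m msum ?n (\<lambda>j. Psi (P j (digit d j i))) K" .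
    have M2: "msum ?n (\<lambda>j. Psi (P j (digit d j i))) K \<in> carrier_mat ?n ?n" by (rule msum_carrier[OF PsiPc])
    have P1: "Psi (1\<^sub>m d) \<in> carrier_mat ?n ?n" by (rule PsiYc) simp
    have dims: "dim_row (msum ?n (\<lambda>j. Psi (P j (digit d j i))) K) = ?n"
      "dim_col (msum ?n (\<lambda>j. Psi (P j (digit d j i))) K) = ?n"
      "dim_row (Psi (1\<^sub>m d)) = ?n" "dim_col (Psi (1\<^sub>m d)) = ?n" using M2 P1 by auto
    show "Psi (Y i) $$ (p,q) = of_real cc * Psi (1\<^sub>m d) $$ (p,q) - (\<Sum>j<K. Psi (P j (digit d j i)) $$ (p,q))"
      unfolding eq using pq by (simp add: dims msum_index[OF PsiPc])
  qed
  have tr1: "(\<Sum>i<?n. Lf ?n (e i) (Psi (1\<^sub>m d))) = of_nat d"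
  proof -
    have "(\<Sum>i<?n. Lf ?n (e i) (Psi (1\<^sub>m d))) = mtrace ?n (Psi (1\<^sub>m d))"
      unfolding e_def by (rule full_trace[OF d K onb PsiYc]) simp
    also have "\<dots> = mtrace d (1\<^sub>m d)" using ch by (simp add: channel_def)
    also have "\<dots> = of_nat d" by (simp add: mtrace_def)
    finally show ?thesis .
  qed
  have trj: "(\<Sum>i<?n. Lf ?n (e i) (Psi (P j (digit d j i)))) = of_nat d * of_real (t + (1 - t) / d)"
    if j: "j < K" for j
  proof -
    have "(\<Sum>i<?n. Lf ?n (e i) (Psi (P j (digit d j i))))
        = (\<Sum>k<d. \<Sum>i\<in>{i. i < ?n \<and> digit d j i = k}. Lf ?n (e i) (Psi (P j k)))"
      by (rule regroup[OF d, symmetric])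
    also have "\<dots> = (\<Sum>k<d. cinner d (B j k) (marginal d K j (Psi (P j k)) *\<^sub>v B j k))"
      unfolding e_def by (rule sum.cong[OF refl], rule ptrace[OF d j _ onb PsiYc[OF Pc]]) simp
    also have "\<dots> = (\<Sum>k<d. cinner d (B j k) (Phi_t d t (P j k) *\<^sub>v B j k))"
      using marg j Pc by simp
    also have "\<dots> = (\<Sum>k<d. of_real (t + (1 - t) / d))"
      by (rule sum.cong[OF refl]) (simp add: P_def Phi_val[OF d Bc[OF j] Bu[OF j]])
    also have "\<dots> = of_nat d * of_real (t + (1 - t) / d)" by simp
    finally show ?thesis .
  qed
  have "(\<Sum>i<?n. Lf ?n (e i) (Psi (Y i)))
      = of_real cc * (\<Sum>i<?n. Lf ?n (e i) (Psi (1\<^sub>m d))) - (\<Sum>i<?n. \<Sum>j<K. Lf ?n (e i) (Psi (P j (digit d j i))))"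
    by (simp add: lin sum_subtractf sum_distrib_left)
  also have "(\<Sum>i<?n. \<Sum>j<K. Lf ?n (e i) (Psi (P j (digit d j i))))
      = (\<Sum>j<K. \<Sum>i<?n. Lf ?n (e i) (Psi (P j (digit d j i))))" by (rule sum.swap)
  also have "\<dots> = (\<Sum>j<K. of_nat d * of_real (t + (1 - t) / d))"
    by (rule sum.cong[OF refl]) (simp add: trj)
  finally have tot: "(\<Sum>i<?n. Lf ?n (e i) (Psi (Y i)))
      = of_real (cc * d - K * (d * (t + (1 - t) / d)))" by (simp add: tr1)
  have "0 \<le> Re (\<Sum>i<?n. Lf ?n (e i) (Psi (Y i)))" using nonneg by (simp add: sum_nonneg)
  then have ineq: "0 \<le> cc * d - K * (d * (t + (1 - t) / d))" by (simp only: tot Re_complex_of_real)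
  have "cc * d = real K + sqrt (real K) * (real d - 1)" using d by (simp add: cc_def)
  moreover have "real K * (real d * (t + (1 - t) / real d)) = real K * t * (real d - 1) + real K"
    using d by (simp add: field_simps)
  ultimately have "0 \<le> (real d - 1) * (sqrt (real K) - real K * t)" using ineq by (simp add: algebra_simps)
  moreover have "(0::real) < real d - 1" using d2 by simp
  ultimately have le: "K * t \<le> sqrt K" by (simp add: zero_le_mult_iff)
  have sK: "0 < sqrt (real K)" using K by simp
  have "sqrt K * (sqrt K * t) \<le> sqrt K * 1" using le sK by (simp add: real_sqrt_mult_self mult.assoc[symmetric])
  then have "sqrt K * t \<le> 1" using sK by simp
  then show ?thesis using sK by (simp add: field_simps)
qed


lemma not_compat:
  assumes d2: "2 \<le> d" and K: "0 < K" and mub: "MUB_family d K B"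
    and t: "t > 1 / sqrt (real K)" and S: "card S = K"
  shows "\<not> compatible d (\<lambda>i. Phi_t d t) S"
proof
  assume "compatible d (\<lambda>i. Phi_t d t) S"
  then obtain Psi where ch: "channel d (d ^ K) Psi"
    and m: "\<forall>j<K. \<forall>X\<in>carrier_mat d d. marginal d K j (Psi X) = Phi_t d t X"
    using S by (auto simp: compatible_def)
  have "t \<le> 1 / sqrt K" by (rule core[OF d2 K mub ch m])
  then show False using t by simp
qed

theorem corollary7p3:
  fixes d N K :: nat and t :: real
  assumes "d \<ge> 2" and "0 < N" and "0 < K"
    and "K \<le> min N (max_MUB d)"
    and "t > 1 / sqrt (real K)"
  shows "NK_strongly_incompatible d N K (\<lambda>i. Phi_t d t)
       \<and> NK_incompatible d N K (\<lambda>i. Phi_t d t)"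
proof -
  obtain B where mub: "MUB_family d K B" using exists_MUB[OF assms(1)] assms(4) by auto
  have strong: "NK_strongly_incompatible d N K (\<lambda>i. Phi_t d t)"
    unfolding NK_strongly_incompatible_def
    using not_compat[OF assms(1) assms(3) mub assms(5)] by blast
  moreover have "NK_incompatible d N K (\<lambda>i. Phi_t d t)"
    unfolding NK_incompatible_def
  proof (intro exI conjI)
    show "{..<K} \<subseteq> {..<N}" using assms(4) by auto
    show "card {..<K} = K" by simp
    show "\<not> compatible d (\<lambda>i. Phi_t d t) {..<K}"
      by (rule not_compat[OF assms(1) assms(3) mub assms(5)]) simp
  qed
  ultimately show ?thesis by blast
qed

end
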